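(* Consider the generalized linear model with design space $\mathcal{X}$ described in the context, and suppose $\mathcal{X}$ is compact, $\nu(\eta)$ is continuous, $q_1,\ldots,q_p$ are continuous with respect to all continuous factors of $\mathbf{x}\in\mathcal{X}$, and there exists $\boldsymbol\xi\in\boldsymbol\Xi(\mathcal{X})$ with $|\mathbf{F}(\boldsymbol\xi)|>0$. Then a design $\boldsymbol\xi_t$ is reported by the ForLion A-optimality algorithm described in the context if and only if $\boldsymbol\xi_t$ is A-optimal among $\boldsymbol\Xi(\mathcal{X})$.
   Context: GLM: a response at covariate $\mathbf{x}\in\mathbb{R}^d$ follows a one-parameter exponential family with mean $\mu$ and $g(\mu)=\mathbf{q}(\mathbf{x})^T\boldsymbol\beta$, with link $g$, predictor functions $\mathbf{q}=(q_1,\ldots,q_p)^T$, fixed $\boldsymbol\beta\in\mathbb{R}^p$, and $\nu(\eta)=[(g^{-1})'(\eta)]^2/\mathrm{Var}(Y)\ge0$. There are $d$ factors, the first $s\ge1$ continuous with ranges $[l_j,r_j]$, the others discrete with finite level sets $I_j$; $\mathcal{X}=\prod_{j=1}^d[l_j,r_j]$ if $s=d$, or $\mathcal{X}=\prod_{j=1}^s[l_j,r_j]\times\mathcal{D}$ with $\mathcal{D}\subseteq\prod_{j=s+1}^dI_j$ if $s<d$. $\mathbf{F}_{\mathbf{x}}=\nu(\mathbf{q}(\mathbf{x})^T\boldsymbol\beta)\mathbf{q}(\mathbf{x})\mathbf{q}(\mathbf{x})^T$; $\boldsymbol\Xi(\mathcal{X})$ is the set of probability measures on $\mathcal{X}$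 with $\mathbf{F}(\boldsymbol\xi)=\int\mathbf{F}_{\mathbf{x}}\boldsymbol\xi(d\mathbf{x})$; $h(\boldsymbol\xi)=[\mathrm{tr}(\mathbf{F}(\boldsymbol\xi)^{-1})]^{-1}$ if $|\mathbf{F}(\boldsymbol\xi)|>0$, else $0$; A-optimal means maximizing $h$ over $\boldsymbol\Xi(\mathcal{X})$. For a finitely supported design $\boldsymbol\xi$, the sensitivity function is $\varphi(\mathbf{x},\boldsymbol\xi)=\nu(\boldsymbol\beta^T\mathbf{q}(\mathbf{x}))\,\mathbf{q}(\mathbf{x})^T\mathbf{F}(\boldsymbol\xi)^{-2}\mathbf{q}(\mathbf{x})$. ForLion A-optimality algorithm: starting from a finitely supported design $\boldsymbol\xi_0$ with $|\mathbf{F}(\boldsymbol\xi_0)|>0$, at each iteration $t$ the current design $\boldsymbol\xi_t$ (finitely supported, with $|\mathbf{F}(\boldsymbol\xi_t)|>0$) is modified by merging nearby support points (only if $\mathbf{F}$ stays nonsingular), re-optimizing the weights on the current support points to an A-optimal allocation (lift-one step), and deleting support points with zero weight; then a point $\mathbf{x}^*\in\arg\max_{\mathbf{x}\in\mathcal{X}}\varphi(\mathbf{x},\boldsymbol\xi_t)$ is found. If $\varphi(\mathbf{x}^*,\boldsymbol\xi_t)\le\mathrm{tr}(\mathbf{F}(\boldsymbol\xi_t)^{-1})$, the algorithm stops and reports $\boldsymbol\xi_t$; otherwise it sets $\boldsymbol\xi_{t+1}=\{(\mathbf{x}_i^{(t)},(1-\alpha_t)w_i^{(t)})\}\cup\{(\mathbf{x}^*,\alpha_t)\}$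 with $\alpha_t\in[0,1]$ maximizing $h(\boldsymbol\xi_{t+1})$ and continues. *)

theory Defs
  imports "HOL-Analysis.Analysis" "HOL-Probability.Probability"
begin

text \<open>The set C of indices
  of continuous factors (nonempty) has ranges [l j, r j]; the remaining (discrete)
  factors j take values in finite level sets I j. The discrete part of x is
  encoded as the vector with continuous coordinates set to 0; D is the set of
  admissible discrete parts.\<close>

definition disc_part :: "'d set \<Rightarrow> real^'d \<Rightarrow> real^'d" where
  "disc_part C x = (\<chi> j. if j \<in> C then 0 else x $ j)"

definition design_space ::
  "'d set \<Rightarrow> ('d \<Rightarrow> real) \<Rightarrow> ('d \<Rightarrow> real) \<Rightarrow> (real^'d) set \<Rightarrow> (real^'d) set" where
  "design_space C l r D =
     (if C = UNIV then {x. \<forall>j. l j \<le> x $ j \<and> x $ j \<le> r j}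
      else {x. (\<forall>j\<in>C. l j \<le> x $ j \<and> x $ j \<le> r j) \<and> disc_part C x \<in> D})"

definition valid_discrete ::
  "'d set \<Rightarrow> ('d \<Rightarrow> real set) \<Rightarrow> (real^'d) set \<Rightarrow> bool" where
  "valid_discrete C I D =
     ((\<forall>j. j \<notin> C \<longrightarrow> finite (I j)) \<and>
      D \<subseteq> {y. \<forall>j. (j \<in> C \<longrightarrow> y $ j = 0) \<and> (j \<notin> C \<longrightarrow> y $ j \<in> I j)})"

definition designs :: "(real^'d) set \<Rightarrow> (real^'d) measure set" where
  "designs X = {M. prob_space M \<and> sets M = sets (restrict_space borel X)}"

definition finsupp_design :: "(real^'d) set \<Rightarrow> (real^'d) measure \<Rightarrow> bool" where
  "finsupp_design X M \<longleftrightarrow> M \<in> designs X \<and>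
     (\<exists>S. finite S \<and> S \<subseteq> X \<and> emeasure M (X - S) = 0)"

definition outer :: "real^'p \<Rightarrow> real^'p^'p" where
  "outer v = (\<chi> i j. v $ i * v $ j)"

definition Fx :: "(real \<Rightarrow> real) \<Rightarrow> (real^'d \<Rightarrow> real^'p) \<Rightarrow> real^'p \<Rightarrow> real^'d \<Rightarrow> real^'p^'p" where
  "Fx nu q beta x = nu (q x \<bullet> beta) *\<^sub>R outer (q x)"

definition FI :: "(real \<Rightarrow> real) \<Rightarrow> (real^'d \<Rightarrow> real^'p) \<Rightarrow> real^'p \<Rightarrow> (real^'d) measure \<Rightarrow> real^'p^'p" where
  "FI nu q beta M = integral\<^sup>L M (Fx nu q beta)"

definition hA :: "(real \<Rightarrow> real) \<Rightarrow> (real^'d \<Rightarrow> real^'p) \<Rightarrow> real^'p \<Rightarrow> (real^'d) measure \<Rightarrow> real" where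
  "hA nu q beta M =
     (if det (FI nu q beta M) > 0 then 1 / trace (matrix_inv (FI nu q beta M)) else 0)"

definition A_optimal ::
  "(real^'d) set \<Rightarrow> (real \<Rightarrow> real) \<Rightarrow> (real^'d \<Rightarrow> real^'p) \<Rightarrow> real^'p \<Rightarrow> (real^'d) measure \<Rightarrow> bool" where
  "A_optimal X nu q beta M \<longleftrightarrow> M \<in> designs X \<and>
     (\<forall>N\<in>designs X. hA nu q beta N \<le> hA nu q beta M)"

definition sens :: "(real \<Rightarrow> real) \<Rightarrow> (real^'d \<Rightarrow> real^'p) \<Rightarrow> real^'p \<Rightarrow> real^'d \<Rightarrow> (real^'d) measure \<Rightarrow> real" where
  "sens nu q beta x M =
     nu (beta \<bullet> q x) *
       (q x \<bullet> ((matrix_inv (FI nu q beta M) ** matrix_inv (FI nu q beta M)) *v q x))"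

text \<open>The ForLion A-optimality algorithm reports the current design xi_t
  (finitely supported, nonsingular) iff, for a maximiser x* of the sensitivity
  function over X, phi(x*, xi_t) <= tr(F(xi_t)^{-1}).\<close>
definition forlion_reports ::
  "(real^'d) set \<Rightarrow> (real \<Rightarrow> real) \<Rightarrow> (real^'d \<Rightarrow> real^'p) \<Rightarrow> real^'p \<Rightarrow> (real^'d) measure \<Rightarrow> bool" where
  "forlion_reports X nu q beta M \<longleftrightarrow>
     (\<exists>xs\<in>X. (\<forall>x\<in>X. sens nu q beta x M \<le> sens nu q beta xs M) \<and>
             sens nu q beta xs M \<le> trace (matrix_inv (FI nu q beta M)))"

end

theory Submission
  imports Defs
begin


definition psd :: "real^'n^'n \<Rightarrow> bool" where
  "psd M \<longleftrightarrow> (\<forall>v. 0 \<le> v \<bullet> (M *v v))"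

definition symm :: "real^'n^'n \<Rightarrow> bool" where
  "symm M \<longleftrightarrow> Finite_Cartesian_Product.transpose M = M"

lemma symm_entry: "symm M \<Longrightarrow> M $ i $ j = M $ j $ i"
  unfolding symm_def by (metis transpose_def vec_lambda_beta)

lemma symm_inner: "symm M \<Longrightarrow> v \<bullet> (M *v w) = w \<bullet> (M *v v)"
  unfolding symm_def
  by (metis dot_lmul_matrix inner_commute vector_transpose_matrix)

lemma mv_add: "(M::real^'n^'n) *v (a + b) = M *v a + M *v b"
  by (simp add: matrix_vector_right_distrib)

lemma psd_zero_imp:
  fixes A :: "real^'n^'n"
  assumes s: "symm A" and p: "psd A" and z: "v \<bullet> (A *v v) = 0"
  shows "A *v v = 0"
proof -
  define w where "w = A *v v"
  define c where "c = w \<bullet> (A *v w)"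
  have c0: "c \<ge> 0" using p unfolding psd_def c_def by auto
  have key: "0 \<le> 2 * t * (w \<bullet> w) + t^2 * c" for t :: real
  proof -
    have "0 \<le> (v + t *\<^sub>R w) \<bullet> (A *v (v + t *\<^sub>R w))" using p unfolding psd_def by auto
    also have "\<dots> = v \<bullet> (A *v v) + t * (v \<bullet> (A *v w)) + t * (w \<bullet> (A *v v)) + t^2 * c"
      by (simp add: mv_add matrix_vector_mult_scaleR inner_add_left inner_add_right c_def power2_eq_square algebra_simps)
    also have "\<dots> = 2 * t * (w \<bullet> w) + t^2 * c"
      using symm_inner[OF s, of v w] z unfolding w_def by (simp add: algebra_simps)
    finally show ?thesis .
  qed
  have "w \<bullet> w = 0"
  proof (rule ccontr)
    assume ne: "w \<bullet> w \<noteq> 0"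
    hence pos: "w \<bullet> w > 0" by (metis inner_gt_zero_iff inner_eq_zero_iff)
    define t where "t = - (w \<bullet> w) / (c + 1)"
    have "0 \<le> 2 * t * (w \<bullet> w) + t^2 * c" by (rule key)
    moreover have "2 * t * (w \<bullet> w) + t^2 * c < 0"
    proof -
      have cp: "c + 1 > 0" using c0 by simp
      have tc: "t * (c + 1) = - (w \<bullet> w)" using cp by (simp add: t_def)
      have tneg: "t < 0" using pos cp by (simp add: t_def)
      have tc2: "t * c = - (w \<bullet> w) - t" using tc by (simp add: algebra_simps)
      have "2 * t * (w \<bullet> w) + t^2 * c = 2 * t * (w \<bullet> w) + t * (t * c)"
        by (simp add: power2_eq_square)
      also have "\<dots> = t * ((w \<bullet> w) - t)" unfolding tc2 by (simp add: algebra_simps)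
      finally have "2 * t * (w \<bullet> w) + t^2 * c = t * ((w \<bullet> w) - t)" .
      moreover have "(w \<bullet> w) - t > 0" using tneg pos by linarith
      hence "t * ((w \<bullet> w) - t) < 0" using tneg by (simp add: mult_neg_pos)
      ultimately show ?thesis by simp
    qed
    ultimately show False by simp
  qed
  thus ?thesis unfolding w_def by simp
qed

lemma inv_lr:
  fixes A :: "real^'n^'n"
  assumes "det A \<noteq> 0"
  shows "A ** matrix_inv A = mat 1" "matrix_inv A ** A = mat 1"
proof -
  have "invertible A" using assms invertible_det_nz by blast
  then have "\<exists>A'. A ** A' = mat 1 \<and> A' ** A = mat 1" unfolding invertible_def by blast
  then have "A ** matrix_inv A = mat 1 \<and> matrix_inv A ** A = mat 1"
    unfolding matrix_inv_def by (rule someI_ex)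
  then show "A ** matrix_inv A = mat 1" "matrix_inv A ** A = mat 1" by auto
qed

lemma inv_unique:
  fixes A G :: "real^'n^'n"
  assumes "A ** G = mat 1"
  shows "matrix_inv A = G"
proof -
  have "det A * det G = 1" using assms by (metis det_I det_mul)
  then have dA: "det A \<noteq> 0" by auto
  have "matrix_inv A = matrix_inv A ** (A ** G)" using assms by (simp add: matrix_mul_rid)
  also have "\<dots> = (matrix_inv A ** A) ** G" by (simp add: matrix_mul_assoc)
  also have "\<dots> = G" using inv_lr(2)[OF dA] by (simp add: matrix_mul_lid)
  finally show ?thesis .
qed

lemma inv_det_nz:
  fixes A :: "real^'n^'n"
  assumes "det A \<noteq> 0"
  shows "det (matrix_inv A) \<noteq> 0"
  using inv_lr(1)[OF assms] by (metis det_I det_mul mult_zero_right zero_neq_one)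

lemma inv_symm:
  fixes A :: "real^'n^'n"
  assumes s: "symm A" and d: "det A \<noteq> 0"
  shows "symm (matrix_inv A)"
proof -
  let ?P = "matrix_inv A"
  let ?T = "Finite_Cartesian_Product.transpose ?P"
  have "?T ** A = mat 1"
    using s inv_lr(1)[OF d] unfolding symm_def
    by (metis matrix_transpose_mul transpose_mat)
  then have "?T = ?T ** (A ** ?P)" using inv_lr(1)[OF d] by (simp add: matrix_mul_rid)
  also have "\<dots> = (?T ** A) ** ?P" by (simp add: matrix_mul_assoc)
  also have "\<dots> = ?P" using \<open>?T ** A = mat 1\<close> by (simp add: matrix_mul_lid)
  finally show ?thesis unfolding symm_def .
qed

lemma inv_psd:
  fixes A :: "real^'n^'n"
  assumes p: "psd A" and d: "det A \<noteq> 0"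
  shows "psd (matrix_inv A)"
  unfolding psd_def
proof
  fix v :: "real^'n"
  let ?w = "matrix_inv A *v v"
  have "A *v ?w = v" using inv_lr(1)[OF d] by (simp add: matrix_vector_mul_assoc matrix_vector_mul_lid)
  then have "v \<bullet> (matrix_inv A *v v) = ?w \<bullet> (A *v ?w)" by (simp add: inner_commute)
  also have "\<dots> \<ge> 0" using p unfolding psd_def by blast
  finally show "0 \<le> v \<bullet> (matrix_inv A *v v)" .
qed

lemma trace_sum: "trace (M::real^'n^'n) = (\<Sum>i\<in>UNIV. M $ i $ i)"
  by (simp add: trace_def)

lemma diag_axis: "(M::real^'n^'n) $ i $ i = axis i 1 \<bullet> (M *v axis i 1)"
  by (simp add: inner_axis' matrix_vector_mult_basis column_def)

lemma col_axis: "(M::real^'n^'n) $ j $ i = (M *v axis i 1) $ j"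
  by (simp add: matrix_vector_mult_basis column_def)

lemma trace_pos:
  fixes P A :: "real^'n^'n"
  assumes s: "symm P" and p: "psd P" and inv: "P ** A = mat 1"
  shows "trace P > 0"
proof -
  have nn: "\<forall>i\<in>UNIV. 0 \<le> P $ i $ i" using p unfolding psd_def diag_axis by auto
  have ge: "trace P \<ge> 0" unfolding trace_sum using nn by (simp add: sum_nonneg)
  show ?thesis
  proof (rule ccontr)
    assume "\<not> trace P > 0"
    with ge have "trace P = 0" by simp
    then have "\<forall>i\<in>UNIV. P $ i $ i = 0" unfolding trace_sum using nn
      by (simp add: sum_nonneg_eq_0_iff)
    then have "P *v axis i 1 = 0" for i using psd_zero_imp[OF s p] by (simp add: diag_axis)
    then have "P $ j $ i = 0" for i j by (simp add: col_axis)
    then have "P = mat 0" by (simp add: vec_eq_iff mat_def)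
    then have "mat 0 = (mat 1 :: real^'n^'n)" using inv by (simp add: matrix_matrix_mult_def mat_def vec_eq_iff)
    then have "(mat 0 :: real^'n^'n) $ i $ i = mat 1 $ i $ i" for i by simp
    then show False by (simp add: mat_def)
  qed
qed

lemma trace_outer: "trace ((M::real^'n^'n) ** outer u) = u \<bullet> (M *v u)"
  unfolding trace_sum outer_def
  by (simp add: matrix_matrix_mult_def matrix_vector_mult_def inner_vec_def sum_distrib_left
      mult.commute mult.left_commute)

lemma trace_MBM:
  fixes M B :: "real^'n^'n"
  assumes s: "symm M" and p: "psd B"
  shows "trace (M ** B ** M) \<ge> 0"
proof -
  define c where "c i = (\<chi> j. M $ j $ i)" for i
  have "(M ** B ** M) $ i $ i = c i \<bullet> (B *v c i)" for i
  proof -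
    have "(M ** B ** M) $ i $ i = (\<Sum>j\<in>UNIV. M $ i $ j * (\<Sum>k\<in>UNIV. B $ j $ k * M $ k $ i))"
    proof -
      have "(M ** B ** M) $ i $ i = (\<Sum>k\<in>UNIV. \<Sum>j\<in>UNIV. M $ i $ j * (B $ j $ k * M $ k $ i))"
        by (simp add: matrix_matrix_mult_def sum_distrib_right mult.assoc)
      also have "\<dots> = (\<Sum>j\<in>UNIV. \<Sum>k\<in>UNIV. M $ i $ j * (B $ j $ k * M $ k $ i))"
        by (rule sum.swap)
      also have "\<dots> = (\<Sum>j\<in>UNIV. M $ i $ j * (\<Sum>k\<in>UNIV. B $ j $ k * M $ k $ i))"
        by (simp add: sum_distrib_left)
      finally show ?thesis .
    qed
    also have "\<dots> = (\<Sum>j\<in>UNIV. M $ j $ i * (\<Sum>k\<in>UNIV. B $ j $ k * M $ k $ i))"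
      using symm_entry[OF s] by simp
    also have "\<dots> = c i \<bullet> (B *v c i)"
      by (simp add: c_def inner_vec_def matrix_vector_mult_def)
    finally show ?thesis .
  qed
  then show ?thesis unfolding trace_sum using p unfolding psd_def by (simp add: sum_nonneg)
qed

lemma mm_sub_l: "(A::real^'n^'n) ** (B - C) = A ** B - A ** C"
  by (simp add: matrix_matrix_mult_def vec_eq_iff algebra_simps sum_subtractf)
lemma mm_sub_r: "((B::real^'n^'n) - C) ** A = B ** A - C ** A"
  by (simp add: matrix_matrix_mult_def vec_eq_iff algebra_simps sum_subtractf)
lemma mm_add_l: "(A::real^'n^'n) ** (B + C) = A ** B + A ** C"
  by (simp add: matrix_matrix_mult_def vec_eq_iff algebra_simps sum.distrib)
lemma mm_add_r: "((B::real^'n^'n) + C) ** A = B ** A + C ** A"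
  by (simp add: matrix_matrix_mult_def vec_eq_iff algebra_simps sum.distrib)
lemma mm_scale_l: "(k *\<^sub>R (A::real^'n^'n)) ** B = k *\<^sub>R (A ** B)"
  by (simp add: matrix_matrix_mult_def vec_eq_iff algebra_simps sum_distrib_left)
lemma mm_scale_r: "(A::real^'n^'n) ** (k *\<^sub>R B) = k *\<^sub>R (A ** B)"
  by (simp add: matrix_matrix_mult_def vec_eq_iff algebra_simps sum_distrib_left)
lemma trace_scale: "trace (k *\<^sub>R (A::real^'n^'n)) = k * trace A"
  by (simp add: trace_sum sum_distrib_left)

lemma key_ineq:
  fixes A B :: "real^'n^'n"
  assumes sA: "symm A" and dA: "det A \<noteq> 0"
    and sB: "symm B" and pB: "psd B" and dB: "det B \<noteq> 0"
  shows "trace (matrix_inv B) \<ge> 2 * trace (matrix_inv A) - trace (matrix_inv A ** matrix_inv A ** B)"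
proof -
  define P where "P = matrix_inv A"
  define Q where "Q = matrix_inv B"
  have BQ: "B ** Q = mat 1" and QB: "Q ** B = mat 1" using inv_lr[OF dB] by (auto simp: Q_def)
  have sP: "symm P" using inv_symm[OF sA dA] by (simp add: P_def)
  have sQ: "symm Q" using inv_symm[OF sB dB] by (simp add: Q_def)
  have sM: "symm (P - Q)" using sP sQ unfolding symm_def by (simp add: transpose_def vec_eq_iff)
  have "(P - Q) ** B ** (P - Q) = P ** B ** P - P - P + Q"
    by (simp add: mm_sub_l mm_sub_r matrix_mul_assoc BQ QB matrix_mul_rid matrix_mul_lid
        flip: matrix_mul_assoc)
  then have "trace ((P - Q) ** B ** (P - Q)) = trace (P ** B ** P) - trace P - trace P + trace Q"
    by (simp only: trace_add trace_sub)
  moreover have "trace (P ** B ** P) = trace (P ** P ** B)"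
    by (metis matrix_mul_assoc trace_mul_sym)
  moreover have "trace ((P - Q) ** B ** (P - Q)) \<ge> 0" by (rule trace_MBM[OF sM pB])
  ultimately show ?thesis by (simp add: P_def Q_def)
qed


lemma det_zero_mat: "det (0::real^'n^'n) = 0"
  by (simp add: det_def power_0_left)

lemma linear_transpose_mat: "linear (Finite_Cartesian_Product.transpose :: real^'n^'n \<Rightarrow> real^'n^'n)"
  by (rule linearI) (simp_all add: transpose_def vec_eq_iff)

lemma linear_quad: "linear (\<lambda>M::real^'n^'n. v \<bullet> (M *v v))"
  by (rule linearI) (simp_all add: matrix_vector_mult_def inner_vec_def vec_eq_iff
      algebra_simps sum.distrib sum_distrib_left)

lemma linear_trace_mul: "linear (\<lambda>M::real^'n^'n. trace (R ** M))"
  by (rule linearI) (simp_all add: mm_add_l mm_scale_r trace_add trace_scale)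

lemma det_pos_integrable:
  assumes "det (FI nu q beta N) \<noteq> 0"
  shows "integrable N (Fx nu q beta)"
  using assms not_integrable_integral_eq[of N "Fx nu q beta"] det_zero_mat
  unfolding FI_def by metis

lemma FI_symm:
  assumes "integrable N (Fx nu q beta)"
  shows "symm (FI nu q beta N)"
proof -
  have "Finite_Cartesian_Product.transpose (FI nu q beta N)
      = integral\<^sup>L N (\<lambda>x. Finite_Cartesian_Product.transpose (Fx nu q beta x))"
    unfolding FI_def
    by (rule integral_bounded_linear[symmetric])
       (simp_all add: assms linear_transpose_mat flip: linear_conv_bounded_linear)
  also have "(\<lambda>x. Finite_Cartesian_Product.transpose (Fx nu q beta x)) = Fx nu q beta"
    by (auto simp: Fx_def outer_def transpose_def vec_eq_iff)
  finally show ?thesis unfolding symm_def FI_def .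
qed

lemma FI_psd:
  assumes "integrable N (Fx nu q beta)" and nn: "\<And>t. nu t \<ge> 0"
  shows "psd (FI nu q beta N)"
  unfolding psd_def
proof
  fix v
  have "v \<bullet> (FI nu q beta N *v v) = integral\<^sup>L N (\<lambda>x. v \<bullet> (Fx nu q beta x *v v))"
    unfolding FI_def
    by (rule integral_bounded_linear[symmetric])
       (simp_all add: assms linear_quad flip: linear_conv_bounded_linear)
  also have "\<dots> \<ge> 0"
  proof (rule Bochner_Integration.integral_nonneg)
    fix x
    have "v \<bullet> (Fx nu q beta x *v v) = nu (q x \<bullet> beta) * (q x \<bullet> v)^2"
      by (simp add: Fx_def outer_def matrix_vector_mult_def inner_vec_def power2_eq_square
          sum_distrib_left sum_distrib_right algebra_simps)
    also have "\<dots> \<ge> 0" using nn by simp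
    finally show "0 \<le> v \<bullet> (Fx nu q beta x *v v)" .
  qed
  finally show "0 \<le> v \<bullet> (FI nu q beta N *v v)" .
qed

lemma trace_inv_pos:
  assumes "det (FI nu q beta N) > 0" and nn: "\<And>t. nu t \<ge> 0"
  shows "trace (matrix_inv (FI nu q beta N)) > 0"
proof -
  let ?A = "FI nu q beta N"
  have d: "det ?A \<noteq> 0" using assms by simp
  have i: "integrable N (Fx nu q beta)" by (rule det_pos_integrable[OF d])
  show ?thesis
    by (rule trace_pos[OF inv_symm[OF FI_symm[OF i] d] inv_psd[OF FI_psd[OF i nn] d] inv_lr(2)[OF d]])
qed

lemma space_design: "N \<in> designs X \<Longrightarrow> space N = X"
  unfolding designs_def
  by (metis (mono_tags, lifting) inf_top.right_neutral mem_Collect_eq sets_eq_imp_space_eq space_borel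
      space_restrict_space)

lemma trace_FI_sens:
  assumes i: "integrable N (Fx nu q beta)" and that: "FI nu q beta A' = A"
  shows "trace (matrix_inv A ** matrix_inv A ** FI nu q beta N) = integral\<^sup>L N (\<lambda>x. sens nu q beta x A')"
    and "integrable N (\<lambda>x. sens nu q beta x A')"
proof -
  let ?R = "matrix_inv A ** matrix_inv A"
  have bl: "bounded_linear (\<lambda>M. trace (?R ** M))"
    by (simp add: linear_trace_mul flip: linear_conv_bounded_linear)
  have eq: "trace (?R ** Fx nu q beta x) = sens nu q beta x A'" for x
    using that
    by (simp add: Fx_def sens_def mm_scale_r trace_scale trace_outer inner_commute)
  have "trace (?R ** FI nu q beta N) = integral\<^sup>L N (\<lambda>x. trace (?R ** Fx nu q beta x))"
    unfolding FI_def by (rule integral_bounded_linear[symmetric, OF bl i])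
  then show "trace (?R ** FI nu q beta N) = integral\<^sup>L N (\<lambda>x. sens nu q beta x A')"
    by (simp add: eq)
  show "integrable N (\<lambda>x. sens nu q beta x A')"
    using integrable_bounded_linear[OF bl i] by (simp add: eq)
qed

lemma dir1:
  assumes nn: "\<And>t. nu t \<ge> 0" and xiD: "xi \<in> designs X"
    and dxi: "det (FI nu q beta xi) > 0"
    and bound: "\<forall>x\<in>X. sens nu q beta x xi \<le> trace (matrix_inv (FI nu q beta xi))"
  shows "A_optimal X nu q beta xi"
  unfolding A_optimal_def
proof (intro conjI ballI)
  show "xi \<in> designs X" by fact
  fix N assume ND: "N \<in> designs X"
  let ?A = "FI nu q beta xi" and ?B = "FI nu q beta N"
  define T where "T = trace (matrix_inv ?A)"
  have Tpos: "T > 0" unfolding T_def by (rule trace_inv_pos[OF dxi nn])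
  have hxi: "hA nu q beta xi = 1 / T" using dxi by (simp add: hA_def T_def)
  show "hA nu q beta N \<le> hA nu q beta xi"
  proof (cases "det ?B > 0")
    case False
    then show ?thesis using hxi Tpos by (simp add: hA_def)
  next
    case True
    have dB: "det ?B \<noteq> 0" using True by simp
    have dA: "det ?A \<noteq> 0" using dxi by simp
    have iA: "integrable xi (Fx nu q beta)" by (rule det_pos_integrable[OF dA])
    have iB: "integrable N (Fx nu q beta)" by (rule det_pos_integrable[OF dB])
    have ineq: "trace (matrix_inv ?B) \<ge> 2 * T - trace (matrix_inv ?A ** matrix_inv ?A ** ?B)"
      unfolding T_def by (rule key_ineq[OF FI_symm[OF iA] dA FI_symm[OF iB] FI_psd[OF iB nn] dB])
    have tr: "trace (matrix_inv ?A ** matrix_inv ?A ** ?B) = integral\<^sup>L N (\<lambda>x. sens nu q beta x xi)"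
      and isens: "integrable N (\<lambda>x. sens nu q beta x xi)"
      using trace_FI_sens[OF iB refl] by auto
    have ps: "prob_space N" using ND by (simp add: designs_def)
    have "integral\<^sup>L N (\<lambda>x. sens nu q beta x xi) \<le> integral\<^sup>L N (\<lambda>x. T)"
      by (rule integral_mono[OF isens]) (use bound space_design[OF ND] ps in \<open>auto simp: T_def prob_space_def intro: finite_measure.integrable_const\<close>)
    also have "\<dots> = T" using prob_space.prob_space[OF ps] by simp
    finally have "trace (matrix_inv ?B) \<ge> T" using ineq tr by linarith
    then show ?thesis using True hxi Tpos by (simp add: hA_def frac_le)
  qed
qed


lemma sets_design: "M \<in> designs X \<Longrightarrow> sets M = sets (restrict_space borel X)"
  by (simp add: designs_def)

lemma design_sets_iff:
  assumes "M \<in> designs X" "X \<in> sets borel"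
  shows "A \<in> sets M \<longleftrightarrow> A \<subseteq> X \<and> A \<in> sets borel"
  using assms sets_restrict_space_iff[of X borel A] by (simp add: sets_design)

lemma finsupp_integral:
  fixes f :: "real^'d \<Rightarrow> 'b::{banach, second_countable_topology}"
  assumes MD: "M \<in> designs X" and Xb: "X \<in> sets borel"
    and S: "finite S" "S \<subseteq> X" and null: "emeasure M (X - S) = 0"
    and fm: "f \<in> borel_measurable M"
  shows "integral\<^sup>L M f = (\<Sum>s\<in>S. measure M {s} *\<^sub>R f s)"
proof -
  have ps: "prob_space M" using MD by (simp add: designs_def)
  have sp: "space M = X" by (rule space_design[OF MD])
  have sing: "{s} \<in> sets M" if "s \<in> S" for s
    using design_sets_iff[OF MD Xb] that S by auto
  have XS: "X - S \<in> sets M"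
  proof -
    have "X - S = X \<inter> (- S)" by auto
    moreover have "- S \<in> sets borel" using S(1) by (simp add: borel_open finite_imp_closed open_Compl)
    ultimately show ?thesis using design_sets_iff[OF MD Xb] Xb by auto
  qed
  define g where "g x = (\<Sum>s\<in>S. indicator {s} x *\<^sub>R f s)" for x
  have gm: "g \<in> borel_measurable M"
    unfolding g_def
    by (intro borel_measurable_sum borel_measurable_scaleR borel_measurable_indicator borel_measurable_const)
       (use sing in auto)
  have ae: "AE x in M. f x = g x"
  proof (rule AE_I')
    show "X - S \<in> null_sets M" using XS null by (simp add: null_sets_def)
    show "{x \<in> space M. f x \<noteq> g x} \<subseteq> X - S"
    proof
      fix x assume x: "x \<in> {x \<in> space M. f x \<noteq> g x}"
      have "x \<notin> S"
      proof
        assume xS: "x \<in> S"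
        have "g x = (\<Sum>s\<in>S. if s = x then f s else 0)"
          unfolding g_def by (intro sum.cong) (auto simp: indicator_def)
        also have "\<dots> = f x" using xS S(1) by (simp add: sum.delta)
        finally show False using x by simp
      qed
      then show "x \<in> X - S" using x sp by auto
    qed
  qed
  have fin: "emeasure M {s} < \<infinity>" for s
    using prob_space.emeasure_le_1[OF ps, of "{s}"] ennreal_one_less_top by (metis infinity_ennreal_def le_less_trans)
  have "integral\<^sup>L M f = integral\<^sup>L M g" by (rule integral_cong_AE[OF fm gm ae])
  also have "\<dots> = (\<Sum>s\<in>S. integral\<^sup>L M (\<lambda>x. indicator {s} x *\<^sub>R f s))"
    unfolding g_def
    by (rule Bochner_Integration.integral_sum) (use sing fin in \<open>auto intro!: integrable_real_indicator\<close>)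
  also have "\<dots> = (\<Sum>s\<in>S. measure M {s} *\<^sub>R f s)"
  proof (intro sum.cong refl)
    fix s assume s: "s \<in> S"
    have "integrable M (indicator {s} :: _ \<Rightarrow> real)"
      using sing[OF s] fin by (intro integrable_real_indicator) auto
    then have "integral\<^sup>L M (\<lambda>x. indicator {s} x *\<^sub>R f s) = integral\<^sup>L M (indicator {s}) *\<^sub>R f s"
      by (rule integral_scaleR_left)
    also have "\<dots> = measure M {s} *\<^sub>R f s" using s sp S by (auto simp: integral_indicator)
    finally show "integral\<^sup>L M (\<lambda>x. indicator {s} x *\<^sub>R f s) = measure M {s} *\<^sub>R f s" .
  qed
  finally show ?thesis .
qed

lemma finsupp_total:
  assumes MD: "M \<in> designs X" and Xb: "X \<in> sets borel"
    and S: "finite S" "S \<subseteq> X" and null: "emeasure M (X - S) = 0"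
  shows "(\<Sum>s\<in>S. measure M {s}) = 1"
proof -
  have ps: "prob_space M" using MD by (simp add: designs_def)
  have sp: "space M = X" by (rule space_design[OF MD])
  have sing: "{s} \<in> sets M" if "s \<in> S" for s
    using design_sets_iff[OF MD Xb] that S by auto
  have Ss: "S \<in> sets M"
    using design_sets_iff[OF MD Xb] S by (auto intro: borel_closed finite_imp_closed)
  have "measure M (X - S) = 0" using null by (simp add: measure_def)
  moreover have "measure M (space M - S) = measure M (space M) - measure M S"
    using ps Ss by (simp add: prob_space_def finite_measure.finite_measure_compl)
  ultimately have "measure M S = 1" using sp prob_space.prob_space[OF ps] by simp
  moreover have "measure M S = (\<Sum>s\<in>S. measure M {s})"
    using ps S(1) sing by (simp add: prob_space_def finite_measure.finite_measure_eq_sum_singleton)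
  ultimately show ?thesis by simp
qed

definition pd :: "(real^'d) set \<Rightarrow> (real^'d) set \<Rightarrow> (real^'d \<Rightarrow> real) \<Rightarrow> (real^'d) measure" where
  "pd X S w = distr (point_measure S (\<lambda>s. ennreal (w s))) (restrict_space borel X) id"

lemma pd_meas: "S \<subseteq> X \<Longrightarrow> id \<in> point_measure S (\<lambda>s. ennreal (w s)) \<rightarrow>\<^sub>M restrict_space borel X"
  by (subst measurable_cong_sets[OF sets_point_measure_count_space refl])
     (auto simp: measurable_count_space_eq1 space_restrict_space)

lemma pd_design:
  assumes S: "finite S" "S \<subseteq> X" and w: "\<And>s. s \<in> S \<Longrightarrow> w s \<ge> 0" and tot: "(\<Sum>s\<in>S. w s) = 1"
  shows "pd X S w \<in> designs X"
  unfolding designs_def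
proof (intro CollectI conjI)
  show "sets (pd X S w) = sets (restrict_space borel X)" by (simp add: pd_def)
  have sp: "space (pd X S w) = X" by (simp add: pd_def space_restrict_space)
  have "emeasure (pd X S w) X = emeasure (point_measure S (\<lambda>s. ennreal (w s))) (id -` X \<inter> S)"
    unfolding pd_def
    by (subst emeasure_distr[OF pd_meas[OF S(2)]])
       (auto simp: space_point_measure sets_restrict_space_iff intro: sets.top[of "restrict_space borel X", simplified space_restrict_space, simplified])
  also have "id -` X \<inter> S = S" using S by auto
  also have "emeasure (point_measure S (\<lambda>s. ennreal (w s))) S = (\<Sum>s\<in>S. ennreal (w s))"
    using S by (simp add: emeasure_point_measure_finite)
  also have "\<dots> = 1" using w tot by (simp add: sum_ennreal)
  finally show "prob_space (pd X S w)" using sp by (intro prob_spaceI) simp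
qed

lemma pd_integral:
  fixes f :: "real^'d \<Rightarrow> 'b::{banach, second_countable_topology}"
  assumes S: "finite S" "S \<subseteq> X" and w: "\<And>s. s \<in> S \<Longrightarrow> w s \<ge> 0"
    and fm: "f \<in> borel_measurable (restrict_space borel X)"
  shows "integral\<^sup>L (pd X S w) f = (\<Sum>s\<in>S. w s *\<^sub>R f s)"
  unfolding pd_def
  using S w by (simp add: integral_distr[OF pd_meas[OF S(2)] fm] lebesgue_integral_point_measure_finite)


lemma outer_mid: "outer u ** (M::real^'n^'n) ** outer u = (u \<bullet> (M *v u)) *\<^sub>R outer u"
proof -
  have "(outer u ** M ** outer u) $ i $ j = ((u \<bullet> (M *v u)) *\<^sub>R outer u) $ i $ j" for i j
  proof -
    have "(outer u ** M ** outer u) $ i $ j = (\<Sum>l\<in>UNIV. (\<Sum>k\<in>UNIV. u $ i * u $ k * M $ k $ l) * (u $ l * u $ j))"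
      by (simp add: matrix_matrix_mult_def outer_def)
    also have "\<dots> = u $ i * u $ j * (\<Sum>l\<in>UNIV. \<Sum>k\<in>UNIV. u $ k * M $ k $ l * u $ l)"
      by (simp add: sum_distrib_left sum_distrib_right algebra_simps)
    also have "(\<Sum>l\<in>UNIV. \<Sum>k\<in>UNIV. u $ k * M $ k $ l * u $ l) = u \<bullet> (M *v u)"
    proof -
      have "u \<bullet> (M *v u) = (\<Sum>k\<in>UNIV. \<Sum>l\<in>UNIV. u $ k * M $ k $ l * u $ l)"
        by (simp add: inner_vec_def matrix_vector_mult_def sum_distrib_left mult.assoc)
      also have "\<dots> = (\<Sum>l\<in>UNIV. \<Sum>k\<in>UNIV. u $ k * M $ k $ l * u $ l)" by (rule sum.swap)
      finally show ?thesis by simp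
    qed
    finally show ?thesis by (simp add: outer_def)
  qed
  then show ?thesis by (simp add: vec_eq_iff)
qed

lemma SM_inverse:
  fixes A :: "real^'n^'n"
  assumes dA: "det A \<noteq> 0" and den: "1 + k * (u \<bullet> (matrix_inv A *v u)) \<noteq> 0" and a: "a \<noteq> 0"
  shows "(a *\<^sub>R (A + k *\<^sub>R outer u)) **
      ((1/a) *\<^sub>R (matrix_inv A - (k / (1 + k * (u \<bullet> (matrix_inv A *v u)))) *\<^sub>R
          (matrix_inv A ** outer u ** matrix_inv A))) = mat 1"
proof -
  define P where "P = matrix_inv A"
  define m where "m = u \<bullet> (P *v u)"
  define r where "r = k / (1 + k * m)"
  have AP: "A ** P = mat 1" using inv_lr[OF dA] by (simp add: P_def)
  have rk: "k - r - k * r * m = 0" using den by (simp add: r_def m_def P_def field_simps)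
  have "(A + k *\<^sub>R outer u) ** (P - r *\<^sub>R (P ** outer u ** P))
      = A ** P - r *\<^sub>R (A ** P ** outer u ** P) + k *\<^sub>R (outer u ** P)
        - (k * r) *\<^sub>R (outer u ** P ** outer u ** P)"
    by (simp add: mm_add_r mm_sub_l mm_scale_l mm_scale_r matrix_mul_assoc algebra_simps)
  also have "outer u ** P ** outer u ** P = m *\<^sub>R (outer u ** P)"
    using outer_mid[of u P] by (simp add: m_def mm_scale_l)
  also have "A ** P ** outer u ** P = outer u ** P" using AP by (simp add: matrix_mul_lid)
  finally have "(A + k *\<^sub>R outer u) ** (P - r *\<^sub>R (P ** outer u ** P))
      = mat 1 + (k - r - k * r * m) *\<^sub>R (outer u ** P)"
    using AP by (simp add: algebra_simps)
  also have "\<dots> = mat 1" using rk by simp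
  finally have main: "(A + k *\<^sub>R outer u) ** (P - r *\<^sub>R (P ** outer u ** P)) = mat 1" .
  show ?thesis
    using main a by (simp add: mm_scale_l mm_scale_r P_def m_def r_def)
qed


lemma continuous_det: "continuous_on UNIV (det :: real^'n^'n \<Rightarrow> real)"
  unfolding det_def[abs_def]
  by (intro continuous_intros continuous_on_prod)

lemma mix_sum:
  fixes g :: "'a \<Rightarrow> 'b::real_vector"
  assumes S: "finite S"
  shows "(\<Sum>s\<in>insert z S. (a * (if s \<in> S then w s else 0) + (if s = z then b else 0)) *\<^sub>R g s)
       = a *\<^sub>R (\<Sum>s\<in>S. w s *\<^sub>R g s) + b *\<^sub>R g z"
proof -
  have fin: "finite (insert z S)" using S by simp
  have "(\<Sum>s\<in>insert z S. (a * (if s \<in> S then w s else 0) + (if s = z then b else 0)) *\<^sub>R g s)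
      = (\<Sum>s\<in>insert z S. (if s \<in> S then (a * w s) *\<^sub>R g s else 0))
        + (\<Sum>s\<in>insert z S. (if s = z then b *\<^sub>R g s else 0))"
    unfolding sum.distrib[symmetric] by (intro sum.cong refl) (simp add: scaleR_add_left)
  also have "(\<Sum>s\<in>insert z S. (if s \<in> S then (a * w s) *\<^sub>R g s else 0)) = (\<Sum>s\<in>insert z S \<inter> S. (a * w s) *\<^sub>R g s)"
    using sum.inter_restrict[OF fin, of "\<lambda>s. (a * w s) *\<^sub>R g s" S] by simp
  also have "insert z S \<inter> S = S" by auto
  also have "(\<Sum>s\<in>insert z S. (if s = z then b *\<^sub>R g s else 0)) = b *\<^sub>R g z"
    using fin by (simp add: sum.delta')
  finally show ?thesis by (simp add: scaleR_sum_right)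
qed

lemma dir2b:
  fixes xi :: "(real^'d) measure" and q :: "real^'d \<Rightarrow> real^'p"
  assumes nn: "\<And>t. nu t \<ge> 0" and Xb: "X \<in> sets borel"
    and fin: "finsupp_design X xi" and dxi: "det (FI nu q beta xi) > 0"
    and opt: "A_optimal X nu q beta xi" and x0: "x0 \<in> X"
  shows "sens nu q beta x0 xi \<le> trace (matrix_inv (FI nu q beta xi))"
proof (rule ccontr)
  assume "\<not> ?thesis"
  then have big: "sens nu q beta x0 xi > trace (matrix_inv (FI nu q beta xi))" by simp
  have xiD: "xi \<in> designs X" using fin by (simp add: finsupp_design_def)
  obtain S where S: "finite S" "S \<subseteq> X" and null: "emeasure xi (X - S) = 0"
    using fin unfolding finsupp_design_def by blast
  define A where "A = FI nu q beta xi"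
  define P where "P = matrix_inv A"
  define T where "T = trace P"
  define u where "u = q x0"
  define c where "c = nu (u \<bullet> beta)"
  define s' where "s' = u \<bullet> ((P ** P) *v u)"
  define m where "m = u \<bullet> (P *v u)"
  have dA: "det A \<noteq> 0" using dxi by (simp add: A_def)
  have iA: "integrable xi (Fx nu q beta)" using det_pos_integrable[OF dA[unfolded A_def]] .
  have pP: "psd P" unfolding P_def A_def by (rule inv_psd[OF FI_psd[OF iA nn] dA[unfolded A_def]])
  have m0: "m \<ge> 0" using pP by (simp add: psd_def m_def)
  have c0: "c \<ge> 0" using nn by (simp add: c_def)
  have sens_eq: "sens nu q beta x0 xi = c * s'"
    by (simp add: sens_def c_def s'_def u_def P_def A_def inner_commute)
  have Tpos: "T > 0" unfolding T_def P_def A_def by (rule trace_inv_pos[OF dxi nn])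
  have big': "T < c * s'" using big sens_eq by (simp add: T_def P_def A_def)
  have fm: "Fx nu q beta \<in> borel_measurable (restrict_space borel X)"
    using borel_measurable_integrable[OF iA] sets_design[OF xiD] by (simp cong: measurable_cong_sets)
  define w0 where "w0 s = measure xi {s}" for s
  have w0nn: "w0 s \<ge> 0" for s by (simp add: w0_def)
  have w0tot: "(\<Sum>s\<in>S. w0 s) = 1" unfolding w0_def by (rule finsupp_total[OF xiD Xb S null])
  have A_eq: "A = (\<Sum>s\<in>S. w0 s *\<^sub>R Fx nu q beta s)"
    unfolding A_def FI_def w0_def
    by (rule finsupp_integral[OF xiD Xb S null borel_measurable_integrable[OF iA]])
  have Fx0: "Fx nu q beta x0 = c *\<^sub>R outer u" by (simp add: Fx_def c_def u_def)
  define F where "F \<alpha> = (1 - \<alpha>) *\<^sub>R A + \<alpha> *\<^sub>R Fx nu q beta x0" for \<alpha> :: real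
  have c1: "isCont det (F 0)" using continuous_det continuous_on_eq_continuous_at open_UNIV by blast
  have c2: "(F \<longlongrightarrow> F 0) (at_right 0)" unfolding F_def by (intro tendsto_intros)
  have "((\<lambda>\<alpha>. det (F \<alpha>)) \<longlongrightarrow> det (F 0)) (at_right 0)"
    using isCont_tendsto_compose[OF c1 c2] .
  moreover have "F 0 = A" by (simp add: F_def)
  ultimately have ev1: "eventually (\<lambda>\<alpha>. det (F \<alpha>) > 0) (at_right 0)"
    using dxi A_def by (metis order_tendstoD(1))
  have "((\<lambda>\<alpha>. T * (1 + (\<alpha> * c / (1 - \<alpha>)) * m) * (1 - \<alpha>)) \<longlongrightarrow> T * (1 + (0 * c / (1 - 0)) * m) * (1 - 0)) (at_right 0)"
    by (intro tendsto_intros) auto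
  then have ev2: "eventually (\<lambda>\<alpha>. T * (1 + (\<alpha> * c / (1 - \<alpha>)) * m) * (1 - \<alpha>) < c * s') (at_right 0)"
    using big' by (simp add: order_tendstoD(2))
  obtain b where b: "b > 0" and bP: "\<And>y. y > 0 \<Longrightarrow> y < b \<Longrightarrow>
      det (F y) > 0 \<and> T * (1 + (y * c / (1 - y)) * m) * (1 - y) < c * s'"
    using eventually_conj[OF ev1 ev2] unfolding eventually_at_right[OF zero_less_one] by blast
  define \<alpha> where "\<alpha> = min (b/2) (1/2)"
  have a0: "\<alpha> > 0" and a1: "\<alpha> < 1" and ab: "\<alpha> < b" using b by (auto simp: \<alpha>_def)
  have detF: "det (F \<alpha>) > 0" and hyp: "T * (1 + (\<alpha> * c / (1 - \<alpha>)) * m) * (1 - \<alpha>) < c * s'"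
    using bP[OF a0 ab] by auto
  define S' where "S' = insert x0 S"
  define w where "w s = (1 - \<alpha>) * (if s \<in> S then w0 s else 0) + (if s = x0 then \<alpha> else 0)" for s
  have S'fin: "finite S'" "S' \<subseteq> X" using S x0 by (auto simp: S'_def)
  have wnn: "w s \<ge> 0" for s using a0 a1 w0nn[of s] by (simp add: w_def)
  have wtot: "(\<Sum>s\<in>S'. w s) = 1"
    using mix_sum[OF S(1), where a="1 - \<alpha>" and w=w0 and b=\<alpha> and z=x0 and g="\<lambda>_. 1::real"] w0tot
    by (simp add: S'_def w_def)
  define mix where "mix = pd X S' w"
  have mixD: "mix \<in> designs X" unfolding mix_def by (rule pd_design[OF S'fin wnn wtot])
  have FImix: "FI nu q beta mix = F \<alpha>"
  proof -
    have "FI nu q beta mix = (\<Sum>s\<in>S'. w s *\<^sub>R Fx nu q beta s)"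
      unfolding FI_def mix_def by (rule pd_integral[OF S'fin wnn fm])
    also have "\<dots> = (1 - \<alpha>) *\<^sub>R A + \<alpha> *\<^sub>R Fx nu q beta x0"
      unfolding S'_def w_def using mix_sum[OF S(1), where a="1 - \<alpha>" and w=w0 and b=\<alpha> and z=x0 and g="Fx nu q beta"] A_eq
      by simp
    finally show ?thesis by (simp add: F_def)
  qed
  define k where "k = \<alpha> * c / (1 - \<alpha>)"
  have k0: "k \<ge> 0" using a0 a1 c0 by (simp add: k_def)
  have D0: "1 + k * m > 0" using k0 m0 by (simp add: add_pos_nonneg)
  have Fk: "F \<alpha> = (1 - \<alpha>) *\<^sub>R (A + k *\<^sub>R outer u)"
    using a1 by (simp add: F_def Fx0 k_def scaleR_add_right)
  define G where "G = (1 / (1 - \<alpha>)) *\<^sub>R (P - (k / (1 + k * m)) *\<^sub>R (P ** outer u ** P))"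
  have FG: "F \<alpha> ** G = mat 1"
    unfolding Fk G_def P_def m_def
    by (rule SM_inverse[OF dA]) (use D0 a1 in \<open>auto simp: m_def P_def\<close>)
  have invG: "matrix_inv (F \<alpha>) = G" by (rule inv_unique[OF FG])
  have trPuP: "trace (P ** outer u ** P) = s'"
  proof -
    have "trace (P ** outer u ** P) = trace (P ** (P ** outer u))" by (rule trace_mul_sym)
    also have "\<dots> = trace ((P ** P) ** outer u)" by (simp add: matrix_mul_assoc)
    also have "\<dots> = s'" by (simp add: trace_outer s'_def)
    finally show ?thesis .
  qed
  have trG: "trace G = (T - (k / (1 + k * m)) * s') / (1 - \<alpha>)"
    by (simp add: G_def trace_scale trace_sub trPuP T_def)
  have "trace G < T"
  proof -
    have ks: "k / (1 + k * m) * s' = \<alpha> * (c * s') / ((1 - \<alpha>) * (1 + k * m))"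
      using a1 by (simp add: k_def)
    have pos: "(1 - \<alpha>) * (1 + k * m) > 0" using a1 D0 by simp
    have "T * ((1 - \<alpha>) * (1 + k * m)) < c * s'" using hyp by (simp add: k_def mult_ac)
    then have "T < c * s' / ((1 - \<alpha>) * (1 + k * m))" using pos by (simp add: pos_less_divide_eq)
    then have "\<alpha> * T < \<alpha> * (c * s' / ((1 - \<alpha>) * (1 + k * m)))" by (rule mult_strict_left_mono[OF _ a0])
    then have "T - (k / (1 + k * m)) * s' < (1 - \<alpha>) * T" using ks by (simp add: algebra_simps)
    then show ?thesis using a1 unfolding trG by (simp add: pos_divide_less_eq mult.commute)
  qed
  moreover have "trace G > 0"
    using trace_inv_pos[of nu q beta mix, OF _ nn] FImix detF invG by simp
  moreover have "hA nu q beta mix \<le> hA nu q beta xi" using opt mixD by (simp add: A_optimal_def)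
  moreover have "hA nu q beta mix = 1 / trace G" using FImix detF invG by (simp add: hA_def)
  moreover have "hA nu q beta xi = 1 / T" using dxi by (simp add: hA_def T_def P_def A_def)
  moreover have "\<And>g. 0 < g \<Longrightarrow> g < T \<Longrightarrow> 1 / T < 1 / g"
    using Tpos by (simp add: divide_strict_left_mono)
  ultimately show False by (metis not_le)
qed


lemma cont_mv: "continuous_on S g \<Longrightarrow> continuous_on S (\<lambda>x. (R::real^'n^'m) *v g x)"
  by (rule bounded_linear.continuous_on[of "(*v) R"])
     (simp_all add: matrix_vector_mul_linear flip: linear_conv_bounded_linear)

lemma cont_disc: "continuous_on UNIV (disc_part C)"
proof -
  have "continuous_on UNIV (\<lambda>x::real^'a. if j \<in> C then 0 else x $ j)" for j
    by (cases "j \<in> C") (simp_all add: linear_continuous_on bounded_linear_vec_nth)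
  then show ?thesis unfolding disc_part_def by (intro continuous_on_vec_lambda)
qed

lemma finite_disc:
  assumes disc: "valid_discrete C I D" and X_def: "X = design_space C l r D"
  shows "finite (disc_part C ` X)"
proof -
  let ?P = "PiE UNIV (\<lambda>j. if j \<in> C then {0} else I j)"
  have "finite ?P" using disc by (intro finite_PiE) (auto simp: valid_discrete_def)
  moreover have "disc_part C ` X \<subseteq> (\<lambda>f. \<chi> j. f j) ` ?P"
  proof
    fix y assume "y \<in> disc_part C ` X"
    then obtain x where x: "x \<in> X" and y: "y = disc_part C x" by blast
    have "y $ j \<in> (if j \<in> C then {0} else I j)" for j
    proof (cases "j \<in> C")
      case True then show ?thesis by (simp add: y disc_part_def)
    next
      case False
      then have "C \<noteq> UNIV" by auto
      then have "y \<in> D" using x X_def y by (simp add: design_space_def)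
      then show ?thesis using disc False by (auto simp: valid_discrete_def)
    qed
    then have "(\<lambda>j. y $ j) \<in> ?P" by auto
    moreover have "y = (\<chi> j. (\<lambda>j. y $ j) j)" by simp
    ultimately show "y \<in> (\<lambda>f. \<chi> j. f j) ` ?P" by blast
  qed
  ultimately show ?thesis by (meson finite_imageI finite_subset)
qed

lemma exists_max:
  fixes f :: "real^'d \<Rightarrow> real" and q :: "real^'d \<Rightarrow> real^'p"
  assumes disc: "valid_discrete C I D" and X_def: "X = design_space C l r D"
    and Xc: "compact X" and Xne: "X \<noteq> {}"
    and nu_cont: "continuous_on UNIV nu"
    and q_cont: "\<And>i x0. x0 \<in> X \<Longrightarrow>
        continuous_on {x \<in> X. disc_part C x = disc_part C x0} (\<lambda>x. q x $ i)"
    and f_def: "f = (\<lambda>x. nu (beta \<bullet> q x) * (q x \<bullet> (R *v q x)))"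
  shows "\<exists>xs\<in>X. \<forall>x\<in>X. f x \<le> f xs"
proof -
  define Sl where "Sl d = {x \<in> X. disc_part C x = d}" for d
  have fin: "finite (disc_part C ` X)" by (rule finite_disc[OF disc X_def])
  have cSl: "compact (Sl d)" for d
  proof -
    have "Sl d = X \<inter> disc_part C -` {d}" by (auto simp: Sl_def)
    moreover have "closed (disc_part C -` {d})" by (rule closed_vimage[OF closed_singleton cont_disc])
    ultimately show ?thesis using compact_Int_closed[OF Xc] by simp
  qed
  have fc: "continuous_on (Sl d) f" if d: "d \<in> disc_part C ` X" for d
  proof -
    obtain x0 where x0: "x0 \<in> X" "d = disc_part C x0" using d by blast
    have qc: "continuous_on (Sl d) q"
    proof -
      have "continuous_on (Sl d) (\<lambda>x. \<chi> i. q x $ i)"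
        using q_cont[OF x0(1)] x0(2) by (intro continuous_on_vec_lambda) (simp add: Sl_def)
      then show ?thesis by simp
    qed
    have nc: "continuous_on (Sl d) (\<lambda>x. nu (beta \<bullet> q x))"
      by (rule continuous_on_compose2[OF nu_cont]) (auto intro!: continuous_intros qc)
    show ?thesis unfolding f_def
      by (intro continuous_intros nc qc cont_mv)
  qed
  have "f ` X = (\<Union>d\<in>disc_part C ` X. f ` Sl d)" by (auto simp: Sl_def)
  moreover have "compact (\<Union>d\<in>disc_part C ` X. f ` Sl d)"
    using fin by (intro compact_UN compact_continuous_image fc cSl)
  ultimately have "compact (f ` X)" by simp
  then obtain s where "s \<in> f ` X" "\<forall>t\<in>f ` X. t \<le> s"
    using compact_attains_sup[of "f ` X"] Xne by auto
  then show ?thesis by auto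
qed


theorem corollary4:
  fixes C :: "'d::finite set" and l r :: "'d \<Rightarrow> real" and I :: "'d \<Rightarrow> real set"
    and D :: "(real^'d) set" and X :: "(real^'d) set"
    and nu :: "real \<Rightarrow> real" and q :: "real^'d \<Rightarrow> real^'p::finite" and beta :: "real^'p"
    and xi :: "(real^'d) measure"
  assumes C_ne: "C \<noteq> {}"
    and disc: "valid_discrete C I D"
    and X_def: "X = design_space C l r D"
    and X_compact: "compact X"
    and nu_cont: "continuous_on UNIV nu"
    and nu_nonneg: "\<And>t. nu t \<ge> 0"
    and q_cont: "\<And>i x0. x0 \<in> X \<Longrightarrow>
        continuous_on {x \<in> X. disc_part C x = disc_part C x0} (\<lambda>x. q x $ i)"
    and exists_nonsing: "\<exists>M\<in>designs X. det (FI nu q beta M) > 0"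
    and xi_fin: "finsupp_design X xi"
    and xi_nonsing: "det (FI nu q beta xi) > 0"
  shows "forlion_reports X nu q beta xi \<longleftrightarrow> A_optimal X nu q beta xi"
proof -
  have Xb: "X \<in> sets borel" using X_compact by (simp add: borel_closed compact_imp_closed)
  have xiD: "xi \<in> designs X" using xi_fin by (simp add: finsupp_design_def)
  have Xne: "X \<noteq> {}"
  proof -
    have "prob_space xi" using xiD by (simp add: designs_def)
    then have "space xi \<noteq> {}" by (rule prob_space.not_empty)
    then show ?thesis using space_design[OF xiD] by simp
  qed
  show ?thesis
  proof
    assume "forlion_reports X nu q beta xi"
    then obtain xs where xs: "xs \<in> X" "\<forall>x\<in>X. sens nu q beta x xi \<le> sens nu q beta xs xi"
      and le: "sens nu q beta xs xi \<le> trace (matrix_inv (FI nu q beta xi))"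
      unfolding forlion_reports_def by blast
    have "\<forall>x\<in>X. sens nu q beta x xi \<le> trace (matrix_inv (FI nu q beta xi))"
      using xs le by (meson order_trans)
    then show "A_optimal X nu q beta xi" by (rule dir1[OF nu_nonneg xiD xi_nonsing])
  next
    assume opt: "A_optimal X nu q beta xi"
    obtain xs where xs: "xs \<in> X" "\<forall>x\<in>X. sens nu q beta x xi \<le> sens nu q beta xs xi"
      using exists_max[OF disc X_def X_compact Xne nu_cont q_cont,
          of "\<lambda>x. sens nu q beta x xi" beta
             "matrix_inv (FI nu q beta xi) ** matrix_inv (FI nu q beta xi)"]
      by (auto simp: sens_def[abs_def])
    have "sens nu q beta xs xi \<le> trace (matrix_inv (FI nu q beta xi))"
      by (rule dir2b[OF nu_nonneg Xb xi_fin xi_nonsing opt xs(1)])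
    then show "forlion_reports X nu q beta xi"
      unfolding forlion_reports_def using xs by blast
  qed
qed

end
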